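(* There exists a dataset of size $n$ for which the disagreement coefficient of the class of binary decision trees (of height at most $d\ge2$, over $\mathrm{dim}\ge2$ input dimensions) is $\Omega(n)$, even if nodes are restricted to test dimensions that are unique along every root-to-leaf path.
   Context: A decision tree routes a point $x\in\mathbb{R}^{\mathrm{dim}}$ from the root; each internal node compares one coordinate $x_a$ with a threshold, each leaf carries a label in $\{0,1\}$. For a dataset $S$ of $n$ points and class $H$: $D_S(h,h')=\frac1n\sum_{x\in S}\mathbb{I}(h(x)\ne h'(x))$, $B_H(h,r)=\{h'\in H:D_S(h,h')\le r\}$, $\mathrm{DIS}_S(V)=\{x\in S:\exists h_1,h_2\in V,h_1(x)\ne h_2(x)\}$, $\theta_h=\sup_{r>0}\frac{|\mathrm{DIS}_S(B_H(h,r))|}{rn}$, $\theta=\sup_{h\in H}\theta_h$. *)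

theory Defs
  imports "HOL-Analysis.Analysis" "HOL-Library.Extended_Real"
begin

text \<open>Points of R^dim are represented as functions nat => real; a point of R^ndim
  is one whose coordinates at indices >= dim vanish. Coordinates are x 0, ..., x (dim-1).\<close>

definition points :: "nat \<Rightarrow> (nat \<Rightarrow> real) set" where
  "points ndim = {x. \<forall>i\<ge>ndim. x i = 0}"

datatype dtree = Leaf bool | Node nat real dtree dtree

fun eval_tree :: "dtree \<Rightarrow> (nat \<Rightarrow> real) \<Rightarrow> bool" where
  "eval_tree (Leaf b) x = b"
| "eval_tree (Node a t l r) x = (if x a \<le> t then eval_tree l x else eval_tree r x)"

fun height :: "dtree \<Rightarrow> nat" where
  "height (Leaf b) = 0"
| "height (Node a t l r) = Suc (max (height l) (height r))"

fun tests_below :: "nat \<Rightarrow> dtree \<Rightarrow> bool" where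
  "tests_below ndim (Leaf b) = True"
| "tests_below ndim (Node a t l r) = (a < ndim \<and> tests_below ndim l \<and> tests_below ndim r)"

fun unique_tests_aux :: "nat set \<Rightarrow> dtree \<Rightarrow> bool" where
  "unique_tests_aux A (Leaf b) = True"
| "unique_tests_aux A (Node a t l r) =
     (a \<notin> A \<and> unique_tests_aux (insert a A) l \<and> unique_tests_aux (insert a A) r)"

definition unique_tests :: "dtree \<Rightarrow> bool" where
  "unique_tests T = unique_tests_aux {} T"

definition tree_class :: "nat \<Rightarrow> nat \<Rightarrow> ((nat \<Rightarrow> real) \<Rightarrow> bool) set" where
  "tree_class d ndim = {eval_tree T | T. height T \<le> d \<and> tests_below ndim T \<and> unique_tests T}"

definition D_S :: "(nat \<Rightarrow> real) set \<Rightarrow> ((nat \<Rightarrow> real) \<Rightarrow> bool) \<Rightarrow> ((nat \<Rightarrow> real) \<Rightarrow> bool) \<Rightarrow> real" where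
  "D_S S h h' = real (card {x\<in>S. h x \<noteq> h' x}) / real (card S)"

definition ball_H :: "(nat \<Rightarrow> real) set \<Rightarrow> ((nat \<Rightarrow> real) \<Rightarrow> bool) set \<Rightarrow> ((nat \<Rightarrow> real) \<Rightarrow> bool) \<Rightarrow> real
    \<Rightarrow> ((nat \<Rightarrow> real) \<Rightarrow> bool) set" where
  "ball_H S H h r = {h'\<in>H. D_S S h h' \<le> r}"

definition DIS :: "(nat \<Rightarrow> real) set \<Rightarrow> ((nat \<Rightarrow> real) \<Rightarrow> bool) set \<Rightarrow> (nat \<Rightarrow> real) set" where
  "DIS S V = {x\<in>S. \<exists>h1\<in>V. \<exists>h2\<in>V. h1 x \<noteq> h2 x}"

definition theta_h :: "(nat \<Rightarrow> real) set \<Rightarrow> ((nat \<Rightarrow> real) \<Rightarrow> bool) set \<Rightarrow> ((nat \<Rightarrow> real) \<Rightarrow> bool) \<Rightarrow> ereal" where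
  "theta_h S H h = (SUP r\<in>{r::real. r > 0}.
       ereal (real (card (DIS S (ball_H S H h r))) / (r * real (card S))))"

definition disagreement_coeff :: "(nat \<Rightarrow> real) set \<Rightarrow> ((nat \<Rightarrow> real) \<Rightarrow> bool) set \<Rightarrow> ereal" where
  "disagreement_coeff S H = (SUP h\<in>H. theta_h S H h)"

end

theory Submission
  imports Defs
begin

definition pt :: "nat \<Rightarrow> nat \<Rightarrow> real" where
  "pt i = (\<lambda>k. if k = 0 then real i else if k = 1 then - real i else 0)"

definition tr :: "nat \<Rightarrow> dtree" where
  "tr i = Node 0 (real i) (Node 1 (- real i) (Leaf True) (Leaf False)) (Leaf False)"

lemma eval_tr: "eval_tree (tr i) (pt j) = (i = j)"
  by (auto simp: tr_def pt_def)

lemma inj_pt: "inj pt"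
proof (rule injI)
  fix i j assume "pt i = pt j"
  then have "pt i 0 = pt j 0" by simp
  then show "i = j" by (simp add: pt_def)
qed

lemma tr_in: "2 \<le> d \<Longrightarrow> 2 \<le> ndim \<Longrightarrow> eval_tree (tr i) \<in> tree_class d ndim"
proof -
  assume a: "2 \<le> d" "2 \<le> ndim"
  have "height (tr i) \<le> d" using a by (simp add: tr_def)
  moreover have "tests_below ndim (tr i)" using a by (simp add: tr_def)
  moreover have "unique_tests (tr i)" by (simp add: tr_def unique_tests_def)
  ultimately show ?thesis unfolding tree_class_def by blast
qed

lemma leaf_in: "eval_tree (Leaf False) \<in> tree_class d ndim"
proof -
  have "unique_tests (Leaf False)" by (simp add: unique_tests_def)
  then show ?thesis unfolding tree_class_def by fastforce
qed

theorem theorem4: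
  shows "\<exists>c::real. c > 0 \<and> (\<exists>N::nat. \<forall>d ndim n. 2 \<le> d \<longrightarrow> 2 \<le> ndim \<longrightarrow> N \<le> n \<longrightarrow>
     (\<exists>S. S \<subseteq> points ndim \<and> finite S \<and> card S = n \<and>
          disagreement_coeff S (tree_class d ndim) \<ge> ereal (c * real n)))"
proof (intro exI[of _ 1] conjI exI[of _ 1] allI impI)
  fix d ndim n :: nat
  assume d: "2 \<le> d" and nd: "2 \<le> ndim" and n: "1 \<le> n"
  define S where "S = pt ` {0..<n}"
  define H where "H = tree_class d ndim"
  define h where "h = eval_tree (Leaf False)"
  have cardS: "card S = n" unfolding S_def
    using card_image[OF inj_on_subset[OF inj_pt]] by simp
  have fin: "finite S" unfolding S_def by simp
  have sub: "S \<subseteq> points ndim" unfolding S_def points_def pt_def using nd by auto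
  have npos: "real n > 0" using n by simp
  have DISeq: "DIS S (ball_H S H h (1 / real n)) = S"
  proof
    show "DIS S (ball_H S H h (1 / real n)) \<subseteq> S" unfolding DIS_def by auto
  next
    show "S \<subseteq> DIS S (ball_H S H h (1 / real n))"
    proof
      fix x assume xS: "x \<in> S"
      then obtain i where i: "i < n" "x = pt i" unfolding S_def by auto
      have set: "{y\<in>S. h y \<noteq> eval_tree (tr i) y} = {x}"
        using i xS unfolding S_def h_def by (auto simp: eval_tr)
      have "D_S S h (eval_tree (tr i)) = 1 / real n"
        unfolding D_S_def set cardS by simp
      then have inb: "eval_tree (tr i) \<in> ball_H S H h (1 / real n)"
        unfolding ball_H_def H_def using tr_in[OF d nd] by simp
      have "D_S S h h = 0" unfolding D_S_def by simp
      then have hb: "h \<in> ball_H S H h (1 / real n)"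
        unfolding ball_H_def H_def h_def using leaf_in npos by simp
      have ne: "h x \<noteq> eval_tree (tr i) x" using i by (simp add: eval_tr h_def)
      show "x \<in> DIS S (ball_H S H h (1 / real n))"
        unfolding DIS_def using xS inb hb ne by blast
    qed
  qed
  have "ereal (1 * real n) = ereal (real (card (DIS S (ball_H S H h (1 / real n)))) / ((1 / real n) * real (card S)))"
    using npos by (simp add: DISeq cardS)
  also have "\<dots> \<le> theta_h S H h"
    unfolding theta_h_def by (rule SUP_upper) (use npos in simp)
  also have "\<dots> \<le> disagreement_coeff S H"
    unfolding disagreement_coeff_def by (rule SUP_upper) (unfold h_def H_def, rule leaf_in)
  finally show "\<exists>S. S \<subseteq> points ndim \<and> finite S \<and> card S = n \<and>
          ereal (1 * real n) \<le> disagreement_coeff S (tree_class d ndim)"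
    using sub fin cardS unfolding H_def by blast
qed simp

end
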